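(* Let $(p^l,W^l)_{l\ge0}$ be the iterates of the $k$-th order $m$-means algorithm described in the context, and assume no set $W_i^l$ is ever empty (so no restart occurs). Then the sequence $\hat{\mathcal H}(p^l_1,\dots,p^l_m,W^l_1,\dots,W^l_m)$ is nonincreasing and converges. If moreover $f(x_1,\dots,x_k)=g(x_1)+\dots+g(x_k)$ for a function $g$ such that for every nonempty $W\subset Q$ the map $p\mapsto\sum_{q\in W}w_q g(\|q-p\|)$ has a unique minimizer on $\mathbb{R}^n$, then the algorithm terminates after finitely many steps.
   Context: $Q=\{q_1,\dots,q_N\}\subset\mathbb{R}^n$ is a finite point set with positive weights $w_q$, $q\in Q$; $m>k\ge1$ sensors with positions $p_1,\dots,p_m\in\mathbb{R}^n$. $f:[0,\infty)^k\to\mathbb{R}$ is nondecreasing and symmetric in its arguments, and the minimization below has a unique solution. Assignment: each $q\in Q$ is assigned to a set of exactly $k$ indices consisting of $k$ sensors nearest to $q$ (ties broken by a fixed rule, e.g. lexicographic order of index sets), and $W_i$ is the set of points assigned to sensor $i$. Extended performance function: $\hat{\mathcal H}(p_1,\dots,p_m,W_1,\dots,W_m)=\sum_{i_1,\dots,i_k\text{ pairwise distinct}}\sum_{q\in W_{i_1}\cap\dots\cap W_{i_k}}w_q f(\|q-p_{i_1}\|,\dots,\|q-p_{i_k}\|)$. Given $W_1,\dots,W_m$, $(C_1,\dots,C_m)=\operatorname{argmin}_{\hat p_1,\dots,\hat p_m\in\mathbb{R}^n}\hat{\mathcal H}(\hat p_1,\dots,\hat p_m,W_1,\dots,W_m)$.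 Algorithm: (1) start with initial $p_i$ and compute the assignment sets $W_i$; (2) set $p_i=C_i$ for all $i$; (3) recompute the $W_i$ from the new $p_i$ (restart at (1) if some $W_i$ is empty); (4) stop if $\hat{\mathcal H}$ was not decreased by steps (2) or (3), otherwise return to (2). *)

theory Defs
  imports "HOL-Analysis.Analysis"
begin

text \<open>Sensors are indexed by a finite type 's (so m = CARD('s)); points live in a
Euclidean space 'a (= R^n).
The function f : [0,\<infinity>)^k \<rightarrow> R is modelled on lists of length k.\<close>

definition f_nondecreasing :: "nat \<Rightarrow> (real list \<Rightarrow> real) \<Rightarrow> bool" where
  "f_nondecreasing k f \<longleftrightarrow>
     (\<forall>xs ys. length xs = k \<and> length ys = k \<and>
        (\<forall>i<k. 0 \<le> xs ! i \<and> xs ! i \<le> ys ! i) \<longrightarrow> f xs \<le> f ys)"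

definition f_symmetric :: "nat \<Rightarrow> (real list \<Rightarrow> real) \<Rightarrow> bool" where
  "f_symmetric k f \<longleftrightarrow>
     (\<forall>xs ys. length xs = k \<and> length ys = k \<and> (\<forall>x\<in>set xs. 0 \<le> x) \<and>
        mset xs = mset ys \<longrightarrow> f xs = f ys)"

definition nearest_set :: "nat \<Rightarrow> ('s \<Rightarrow> 'a::metric_space) \<Rightarrow> 'a \<Rightarrow> 's set \<Rightarrow> bool" where
  "nearest_set k p q S \<longleftrightarrow>
     card S = k \<and> (\<forall>i\<in>S. \<forall>j. j \<notin> S \<longrightarrow> dist q (p i) \<le> dist q (p j))"

text \<open>Assignment sets W_i, given a fixed (deterministic) tie-breaking selection rule sel.\<close>
definition assign_sets :: "'a set \<Rightarrow> (('s \<Rightarrow> 'a) \<Rightarrow> 'a \<Rightarrow> 's set) \<Rightarrow> ('s \<Rightarrow> 'a) \<Rightarrow> 's \<Rightarrow> 'a set" where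
  "assign_sets Q sel p i = {q\<in>Q. i \<in> sel p q}"

definition Hhat :: "nat \<Rightarrow> (real list \<Rightarrow> real) \<Rightarrow> ('a \<Rightarrow> real) \<Rightarrow>
    ('s::finite \<Rightarrow> 'a::metric_space) \<Rightarrow> ('s \<Rightarrow> 'a set) \<Rightarrow> real" where
  "Hhat k f w p W =
     (\<Sum>is\<in>{is. length is = k \<and> distinct is}.
        \<Sum>q\<in>(\<Inter>i\<in>set is. W i). w q * f (map (\<lambda>i. dist q (p i)) is))"

definition is_Hhat_minimizer :: "nat \<Rightarrow> (real list \<Rightarrow> real) \<Rightarrow> ('a \<Rightarrow> real) \<Rightarrow>
    ('s::finite \<Rightarrow> 'a::metric_space) \<Rightarrow> ('s \<Rightarrow> 'a set) \<Rightarrow> bool" where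
  "is_Hhat_minimizer k f w c W \<longleftrightarrow> (\<forall>c'. Hhat k f w c W \<le> Hhat k f w c' W)"

end

theory Submission
  imports Defs
begin

lemma finite_L: "finite {is::('s::finite) list. length is = k \<and> distinct is}"
proof -
  have "{is::'s list. length is = k \<and> distinct is} \<subseteq> {xs. set xs \<subseteq> UNIV \<and> length xs = k}" by auto
  moreover have "finite {xs::'s list. set xs \<subseteq> UNIV \<and> length xs = k}"
    by (rule finite_lists_length_eq) simp
  ultimately show ?thesis by (rule finite_subset)
qed

lemma Hhat_rew:
  fixes p :: "'s::finite \<Rightarrow> 'a::metric_space"
  assumes k1: "1 \<le> k" and finQ: "finite Q"
    and V: "\<And>i. V i = {q\<in>Q. i \<in> S q}"
  shows "Hhat k f w p V = (\<Sum>q\<in>Q. \<Sum>is\<in>{is. (length is = k \<and> distinct is) \<and> set is \<subseteq> S q}.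
            w q * f (map (\<lambda>i. dist q (p i)) is))"
proof -
  let ?L = "{is::'s list. length is = k \<and> distinct is}"
  let ?F = "\<lambda>q is. w q * f (map (\<lambda>i. dist q (p i)) is)"
  have "Hhat k f w p V = (\<Sum>is\<in>?L. \<Sum>q\<in>Q. if set is \<subseteq> S q then ?F q is else 0)"
    unfolding Hhat_def
  proof (rule sum.cong[OF refl])
    fix "is" assume "is \<in> ?L"
    then have ne: "is \<noteq> []" using k1 by auto
    have "(\<Inter>i\<in>set is. V i) = {q\<in>Q. set is \<subseteq> S q}"
      using ne by (auto simp: V) (metis empty_iff list.set_sel(1))
    then show "(\<Sum>q\<in>(\<Inter>i\<in>set is. V i). ?F q is) = (\<Sum>q\<in>Q. if set is \<subseteq> S q then ?F q is else 0)"
      using sum.inter_filter[OF finQ] by simp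
  qed
  also have "\<dots> = (\<Sum>q\<in>Q. \<Sum>is\<in>?L. if set is \<subseteq> S q then ?F q is else 0)"
    by (rule sum.swap)
  also have "\<dots> = (\<Sum>q\<in>Q. \<Sum>is\<in>{is\<in>?L. set is \<subseteq> S q}. ?F q is)"
    by (simp only: sum.inter_filter[OF finite_L])
  also have "\<dots> = (\<Sum>q\<in>Q. \<Sum>is\<in>{is. (length is = k \<and> distinct is) \<and> set is \<subseteq> S q}. ?F q is)"
    by (rule sum.cong[OF refl], rule sum.cong) auto
  finally show ?thesis .
qed

lemma compare_sets:
  fixes d :: "'s::finite \<Rightarrow> real"
  assumes fmono: "f_nondecreasing k f"
    and card: "card S = card T"
    and near: "\<forall>i\<in>S. \<forall>j. j \<notin> S \<longrightarrow> d i \<le> d j"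
    and dnn: "\<forall>i. 0 \<le> d i"
    and wq: "0 \<le> c"
  shows "(\<Sum>is\<in>{is. (length is = k \<and> distinct is) \<and> set is \<subseteq> S}. c * f (map d is))
       \<le> (\<Sum>is\<in>{is. (length is = k \<and> distinct is) \<and> set is \<subseteq> T}. c * f (map d is))"
proof -
  have c1: "card (T - S) = card T - card (T \<inter> S)"
    by (rule card_Diff_subset_Int) simp
  have c2: "card (S - T) = card S - card (S \<inter> T)"
    by (rule card_Diff_subset_Int) simp
  have "card (T - S) = card (S - T)"
    unfolding c1 c2 card by (simp only: Int_commute)
  then obtain h where h: "bij_betw h (T - S) (S - T)"
    using finite_same_card_bij[of "T - S" "S - T"] by auto
  define \<pi> where "\<pi> i = (if i \<in> S then i else h i)" for i
  have pi: "bij_betw \<pi> T S"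
  proof -
    have "bij_betw \<pi> (T - S) (S - T)"
      using h by (rule bij_betw_cong[THEN iffD1, rotated]) (auto simp: \<pi>_def)
    moreover have "bij_betw \<pi> (T \<inter> S) (S \<inter> T)"
      by (auto simp: \<pi>_def bij_betw_def inj_on_def)
    ultimately have "bij_betw \<pi> ((T - S) \<union> (T \<inter> S)) ((S - T) \<union> (S \<inter> T))"
      by (rule bij_betw_combine) auto
    moreover have "(T - S) \<union> (T \<inter> S) = T" "(S - T) \<union> (S \<inter> T) = S" by auto
    ultimately show ?thesis by simp
  qed
  have dle: "d (\<pi> i) \<le> d i" if "i \<in> T" for i
  proof (cases "i \<in> S")
    case True then show ?thesis by (simp add: \<pi>_def)
  next
    case False
    then have "h i \<in> S" using h that by (auto simp: bij_betw_def)
    then show ?thesis using near False by (simp add: \<pi>_def)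
  qed
  let ?LS = "{is. (length is = k \<and> distinct is) \<and> set is \<subseteq> S}"
  let ?LT = "{is. (length is = k \<and> distinct is) \<and> set is \<subseteq> T}"
  define \<pi>' where "\<pi>' = inv_into T \<pi>"
  have pi': "bij_betw \<pi>' S T" unfolding \<pi>'_def using pi by (rule bij_betw_inv_into)
  have inv1: "\<pi>' (\<pi> i) = i" if "i \<in> T" for i
    unfolding \<pi>'_def using pi that by (simp add: bij_betw_def)
  have inv2: "\<pi> (\<pi>' j) = j" if "j \<in> S" for j
    unfolding \<pi>'_def using pi that by (simp add: bij_betw_def f_inv_into_f)
  have bl: "bij_betw (map \<pi>) ?LT ?LS"
  proof (rule bij_betw_byWitness[where f' = "map \<pi>'"])
    show "\<forall>a\<in>?LT. map \<pi>' (map \<pi> a) = a"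
      using inv1 by (auto intro!: map_idI)
    show "\<forall>a\<in>?LS. map \<pi> (map \<pi>' a) = a"
      using inv2 by (auto intro!: map_idI)
    show "map \<pi> ` ?LT \<subseteq> ?LS"
    proof
      fix x assume "x \<in> map \<pi> ` ?LT"
      then obtain a where a: "a \<in> ?LT" "x = map \<pi> a" by auto
      have "inj_on \<pi> (set a)" using pi a(1) by (auto simp: bij_betw_def intro: inj_on_subset)
      then show "x \<in> ?LS" using a pi by (auto simp: distinct_map bij_betw_def)
    qed
    show "map \<pi>' ` ?LS \<subseteq> ?LT"
    proof
      fix x assume "x \<in> map \<pi>' ` ?LS"
      then obtain a where a: "a \<in> ?LS" "x = map \<pi>' a" by auto
      have "inj_on \<pi>' (set a)" using pi' a(1) by (auto simp: bij_betw_def intro: inj_on_subset)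
      then show "x \<in> ?LT" using a pi' by (auto simp: distinct_map bij_betw_def)
    qed
  qed
  have "(\<Sum>is\<in>?LS. c * f (map d is)) = (\<Sum>is\<in>?LT. c * f (map d (map \<pi> is)))"
    using sum.reindex_bij_betw[OF bl, of "\<lambda>is. c * f (map d is)"] by simp
  also have "\<dots> \<le> (\<Sum>is\<in>?LT. c * f (map d is))"
  proof (rule sum_mono)
    fix "is" assume a: "is \<in> ?LT"
    have c: "\<forall>i<k. 0 \<le> map d (map \<pi> is) ! i \<and> map d (map \<pi> is) ! i \<le> map d is ! i"
    proof (intro allI impI)
      fix i assume i: "i < k"
      then have "is ! i \<in> T" using a nth_mem[of i "is"] by auto
      then show "0 \<le> map d (map \<pi> is) ! i \<and> map d (map \<pi> is) ! i \<le> map d is ! i"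
        using i a dnn dle by simp
    qed
    have "f (map d (map \<pi> is)) \<le> f (map d is)"
      using fmono c a unfolding f_nondecreasing_def by simp
    then show "c * f (map d (map \<pi> is)) \<le> c * f (map d is)"
      using wq by (rule mult_left_mono)
  qed
  finally show ?thesis .
qed

theorem mainTheorem7:
  fixes Q :: "'a::euclidean_space set"
    and w :: "'a \<Rightarrow> real"
    and k :: nat
    and f :: "real list \<Rightarrow> real"
    and sel :: "('s::finite \<Rightarrow> 'a) \<Rightarrow> 'a \<Rightarrow> 's set"
    and P :: "nat \<Rightarrow> 's \<Rightarrow> 'a"
    and W :: "nat \<Rightarrow> 's \<Rightarrow> 'a set"
  assumes finQ: "finite Q"
    and wpos: "\<forall>q\<in>Q. 0 < w q"
    and k1: "1 \<le> k"
    and mk: "k < CARD('s)"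
    and fmono: "f_nondecreasing k f"
    and fsym: "f_symmetric k f"
    and sel_ok: "\<forall>p. \<forall>q\<in>Q. nearest_set k p q (sel p q)"
    and W_def: "\<forall>l. W l = assign_sets Q sel (P l)"
    and W_ne: "\<forall>l i. W l i \<noteq> {}"
    and unique_min: "\<forall>l. \<exists>!c. is_Hhat_minimizer k f w c (W l)"
    and P_step: "\<forall>l. is_Hhat_minimizer k f w (P (Suc l)) (W l)"
  shows "(\<forall>l. Hhat k f w (P (Suc l)) (W (Suc l)) \<le> Hhat k f w (P l) (W l))
       \<and> convergent (\<lambda>l. Hhat k f w (P l) (W l))
       \<and> ((\<exists>g :: real \<Rightarrow> real.
              (\<forall>xs. length xs = k \<and> (\<forall>x\<in>set xs. 0 \<le> x) \<longrightarrow> f xs = sum_list (map g xs))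
            \<and> (\<forall>V. V \<subseteq> Q \<and> V \<noteq> {} \<longrightarrow>
                  (\<exists>!p. \<forall>p'. (\<Sum>q\<in>V. w q * g (norm (q - p))) \<le> (\<Sum>q\<in>V. w q * g (norm (q - p'))))))
          \<longrightarrow> (\<exists>l. \<not> (Hhat k f w (P (Suc l)) (W (Suc l)) < Hhat k f w (P l) (W l))))"
proof -
  let ?H = "\<lambda>l. Hhat k f w (P l) (W l)"
  let ?L = "{is::'s list. length is = k \<and> distinct is}"
  have rew: "Hhat k f w p (W l) = (\<Sum>q\<in>Q. \<Sum>is\<in>{is. (length is = k \<and> distinct is) \<and> set is \<subseteq> sel (P l) q}.
            w q * f (map (\<lambda>i. dist q (p i)) is))" for p l
    by (rule Hhat_rew[OF k1 finQ]) (simp add: W_def assign_sets_def)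
  have reassign: "Hhat k f w p (W l') \<le> Hhat k f w p (W l)" if "p = P l'" for p l l'
    unfolding rew
  proof (rule sum_mono)
    fix q assume q: "q \<in> Q"
    have n1: "nearest_set k p q (sel p q)" and n2: "nearest_set k (P l) q (sel (P l) q)"
      using sel_ok q by auto
    show "(\<Sum>is\<in>{is. (length is = k \<and> distinct is) \<and> set is \<subseteq> sel (P l') q}. w q * f (map (\<lambda>i. dist q (p i)) is))
      \<le> (\<Sum>is\<in>{is. (length is = k \<and> distinct is) \<and> set is \<subseteq> sel (P l) q}. w q * f (map (\<lambda>i. dist q (p i)) is))"
      using compare_sets[OF fmono, of "sel (P l') q" "sel (P l) q" "\<lambda>i. dist q (p i)" "w q"]
        n1 n2 that wpos q unfolding nearest_set_def by (simp add: less_imp_le)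
  qed
  have minH: "Hhat k f w (P (Suc l)) (W l) \<le> Hhat k f w c (W l)" for l c
    using P_step unfolding is_Hhat_minimizer_def by blast
  have step: "?H (Suc l) \<le> Hhat k f w (P (Suc l)) (W l)" for l
    using reassign by blast
  have dec: "?H (Suc l) \<le> ?H l" for l
    using step[of l] minH[of l "P l"] by linarith
  define f0 where "f0 = \<bar>f (replicate k 0)\<bar>"
  define B where "B = - (\<Sum>q\<in>Q. \<Sum>is\<in>?L. w q * f0)"
  have lb: "B \<le> ?H l" for l
  proof -
    have "(\<Sum>q\<in>Q. - (\<Sum>is\<in>?L. w q * f0)) \<le> (\<Sum>q\<in>Q. \<Sum>is\<in>{is. (length is = k \<and> distinct is) \<and> set is \<subseteq> sel (P l) q}.
            w q * f (map (\<lambda>i. dist q (P l i)) is))"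
    proof (rule sum_mono)
      fix q assume q: "q \<in> Q"
      let ?S = "{is. (length is = k \<and> distinct is) \<and> set is \<subseteq> sel (P l) q}"
      have "- (\<Sum>is\<in>?L. w q * f0) \<le> - (\<Sum>is\<in>?S. w q * f0)"
        using sum_mono2[OF finite_L, where A="?S" and f="\<lambda>_. w q * f0"] wpos q
        by (auto simp: f0_def less_imp_le)
      also have "\<dots> \<le> (\<Sum>is\<in>?S. w q * f (map (\<lambda>i. dist q (P l i)) is))"
        unfolding sum_negf[symmetric]
      proof (rule sum_mono)
        fix "is" assume a: "is \<in> ?S"
        have "f (replicate k 0) \<le> f (map (\<lambda>i. dist q (P l i)) is)"
          using fmono a unfolding f_nondecreasing_def by auto
        then have "- f0 \<le> f (map (\<lambda>i. dist q (P l i)) is)" unfolding f0_def by linarith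
        then show "- (w q * f0) \<le> w q * f (map (\<lambda>i. dist q (P l i)) is)"
          using wpos q mult_left_mono[of "- f0" _ "w q"] by (auto simp: less_imp_le)
      qed
      finally show "- (\<Sum>is\<in>?L. w q * f0) \<le> (\<Sum>is\<in>?S. w q * f (map (\<lambda>i. dist q (P l i)) is))" .
    qed
    then show ?thesis unfolding B_def rew by (simp add: sum_negf)
  qed
  have conv: "convergent ?H"
  proof -
    have "antimono_on UNIV ?H"
      using dec by (simp add: decseq_Suc_iff)
    then obtain Lm where "?H \<longlonglongrightarrow> Lm"
      using decseq_convergent[of ?H B] lb by blast
    then show ?thesis by (auto simp: convergent_def)
  qed
  have trm: "\<exists>l. \<not> (?H (Suc l) < ?H l)"
  proof (rule ccontr)
    assume "\<not> ?thesis"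
    then have sd: "?H (Suc l) < ?H l" for l by auto
    define a where "a j = Hhat k f w (P (Suc (2*j))) (W (2*j))" for j
    have "a (Suc j) < a j" for j
    proof -
      have "a (Suc j) \<le> ?H (Suc (Suc (2*j)))"
        using minH[of "Suc (Suc (2*j))" "P (Suc (Suc (2*j)))"] by (simp add: a_def)
      also have "\<dots> < ?H (Suc (2*j))" by (rule sd)
      also have "\<dots> \<le> a j" using step[of "2*j"] by (simp add: a_def)
      finally show ?thesis .
    qed
    then have "strict_mono (\<lambda>j. - a j)"
      unfolding strict_mono_Suc_iff by simp
    then have inja: "inj (\<lambda>j. - a j)" by (rule strict_mono_imp_inj_on)
    have "inj (\<lambda>j. W (2*j))"
    proof (rule injI)
      fix i j assume e: "W (2*i) = W (2*j)"
      have "a i \<le> a j" using minH[of "2*i" "P (Suc (2*j))"] e by (simp add: a_def)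
      moreover have "a j \<le> a i" using minH[of "2*j" "P (Suc (2*i))"] e by (simp add: a_def)
      ultimately have "- a i = - a j" by simp
      then show "i = j" by (intro injD[OF inja]) simp
    qed
    moreover have "range (\<lambda>j. W (2*j)) \<subseteq> Pi UNIV (\<lambda>_. Pow Q)"
      using W_def by (auto simp: assign_sets_def)
    moreover have "finite (Pi UNIV (\<lambda>_::'s. Pow Q))"
      using finite_PiE[of UNIV "\<lambda>_::'s. Pow Q"] finQ by (simp add: PiE_UNIV_domain)
    ultimately have "finite (UNIV :: nat set)"
      by (metis finite_imageD finite_subset)
    then show False by simp
  qed
  show ?thesis using dec conv trm by blast
qed

end
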